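(* Let $G$ be a finite simple graph, $s\geq1$, and $e_1,\dots,e_s$ edges of $G$ (repetitions allowed). If $u$ and $v$ are vertices of $G$ (possibly $u=v$) that are even-connected with respect to $e_1\cdots e_s$, then $uv\in(I(G)^{s+1}:e_1\cdots e_s)$.
   Context: $S=K[\,x : x\in V(G)\,]$, $I(G)=(xy : xy\text{ an edge of } G)$, edges identified with degree-2 monomials, $(J:m)=\{f\in S: fm\in J\}$. Even-connection: vertices $u,v$ (possibly equal) are even-connected with respect to the sequence $e_1,\dots,e_s$ if there is a sequence of vertices $p_0,p_1,\dots,p_{2k+1}$ with $k\geq1$ (vertices may repeat) such that (1) $p_0=u$, $p_{2k+1}=v$; (2) for all $0\leq l\leq k-1$, $p_{2l+1}p_{2l+2}=e_i$ for some $i$; (3) for every $i$, $|\{l\geq0 : p_{2l+1}p_{2l+2}=e_i\}|\leq|\{j : e_j=e_i\}|$; (4) for all $0\leq r\leq 2k$, $p_rp_{r+1}$ is an edge of $G$. *)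

theory Defs
  imports Main "HOL-Library.Poly_Mapping"
begin

text \<open>Polynomial ring K[x : x in V], V = UNIV of a finite type 'v:
  polynomials are finitely supported maps from monomials (exponent vectors
  'v =>0 nat) to coefficients in the field 'k.\<close>

type_synonym ('v, 'k) mpoly = "('v \<Rightarrow>\<^sub>0 nat) \<Rightarrow>\<^sub>0 'k"

definition Var :: "'v \<Rightarrow> ('v, 'k::field) mpoly" where
  "Var x = Poly_Mapping.single (Poly_Mapping.single x 1) 1"

definition simple_graph :: "'v set set \<Rightarrow> bool" where
  "simple_graph E \<longleftrightarrow> (\<forall>e\<in>E. \<exists>x y. x \<noteq> y \<and> e = {x, y})"

definition edge_mon :: "'v set \<Rightarrow> ('v, 'k::field) mpoly" where
  "edge_mon e = (\<Prod>x\<in>e. Var x)"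

definition ideal_gen :: "'a::comm_ring_1 set \<Rightarrow> 'a set" where
  "ideal_gen A = {(\<Sum>a\<in>F. c a * a) | F c. finite F \<and> F \<subseteq> A}"

definition ideal_prod :: "'a::comm_ring_1 set \<Rightarrow> 'a set \<Rightarrow> 'a set" where
  "ideal_prod I J = ideal_gen {a * b | a b. a \<in> I \<and> b \<in> J}"

fun ideal_pow :: "'a::comm_ring_1 set \<Rightarrow> nat \<Rightarrow> 'a set" where
  "ideal_pow I 0 = UNIV"
| "ideal_pow I (Suc n) = ideal_prod (ideal_pow I n) I"

definition colon_ideal :: "'a::comm_ring_1 set \<Rightarrow> 'a \<Rightarrow> 'a set" where
  "colon_ideal J m = {f. f * m \<in> J}"

definition edge_ideal :: "'v set set \<Rightarrow> ('v, 'k::field) mpoly set" where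
  "edge_ideal E = ideal_gen (edge_mon ` E)"

definition even_connected :: "'v set set \<Rightarrow> 'v set list \<Rightarrow> 'v \<Rightarrow> 'v \<Rightarrow> bool" where
  "even_connected E es u v \<longleftrightarrow>
     (\<exists>(p :: nat \<Rightarrow> 'v) k. k \<ge> 1 \<and> p 0 = u \<and> p (2*k+1) = v \<and>
        (\<forall>l<k. {p (2*l+1), p (2*l+2)} \<in> set es) \<and>
        (\<forall>e \<in> set es. card {l. l < k \<and> {p (2*l+1), p (2*l+2)} = e} \<le> count_list es e) \<and>
        (\<forall>r\<le>2*k. {p r, p (r+1)} \<in> E))"

end

theory Submission
  imports Defs "HOL-Library.Multiset"
begin

lemma mon_in_pow:
  fixes N :: "'v set multiset"
  assumes "set_mset N \<subseteq> E"
  shows "(prod_mset (image_mset edge_mon N) :: ('v,'k::field) mpoly) \<in> ideal_pow (edge_ideal E) (size N)"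
  using assms
proof (induction N)
  case empty
  then show ?case by simp
next
  case (add x N)
  have IH: "(prod_mset (image_mset edge_mon N) :: ('v,'k) mpoly) \<in> ideal_pow (edge_ideal E) (size N)"
    using add by auto
  have xE: "(edge_mon x :: ('v,'k) mpoly) \<in> edge_ideal E"
    unfolding edge_ideal_def ideal_gen_def
    by (rule CollectI, rule exI[of _ "{edge_mon x}"], rule exI[of _ "\<lambda>_. 1"]) (use add in auto)
  let ?a = "(prod_mset (image_mset edge_mon N) :: ('v,'k) mpoly)"
  have "?a * edge_mon x \<in> ideal_prod (ideal_pow (edge_ideal E) (size N)) (edge_ideal E)"
    unfolding ideal_prod_def ideal_gen_def
    apply (rule CollectI, rule exI[of _ "{?a * edge_mon x}"], rule exI[of _ "\<lambda>_. 1"])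
    using IH xE by auto
  then show ?case by (simp add: mult.commute)
qed

lemma prod_pairs:
  fixes g :: "nat \<Rightarrow> 'a::comm_monoid_mult"
  shows "(\<Prod>l<k. g (2*l) * g (2*l+1)) = (\<Prod>r<2*k. g r)"
  by (induction k) (simp_all add: mult.assoc)

lemma count_map_upt:
  "count_list (map f [0..<k]) e = card {l. l < k \<and> f l = e}"
proof (induction k)
  case 0
  then show ?case by simp
next
  case (Suc k)
  have "{l. l < Suc k \<and> f l = e} = {l. l < k \<and> f l = e} \<union> (if f k = e then {k} else {})"
    by (auto simp: less_Suc_eq)
  then show ?case using Suc by (simp add: card_insert_if)
qed

lemma edge_mon_pair:
  assumes "a \<noteq> b"
  shows "(edge_mon {a,b} :: ('v,'k::field) mpoly) = Var a * Var b"
  using assms by (simp add: edge_mon_def)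

lemma pm_upt:
  "prod_mset (image_mset g (mset (map f [0..<k]))) = (\<Prod>l<k. g (f l))"
  by (induction k) (simp_all add: mult.commute)

theorem theorem6p5:
  fixes E :: "('v::finite) set set" and es :: "'v set list" and u v :: 'v
  assumes "simple_graph E"
    and "length es \<ge> 1"
    and "set es \<subseteq> E"
    and "even_connected E es u v"
  shows "(Var u * Var v :: ('v, 'k::field) mpoly)
           \<in> colon_ideal (ideal_pow (edge_ideal E) (length es + 1))
                         (prod_list (map edge_mon es))"
proof -
  obtain p :: "nat \<Rightarrow> 'v" and k :: nat where k1: "k \<ge> 1" and p0: "p 0 = u" and pk: "p (2*k+1) = v"
    and c2: "\<forall>l<k. {p (2*l+1), p (2*l+2)} \<in> set es"
    and c3: "\<forall>e \<in> set es. card {l. l < k \<and> {p (2*l+1), p (2*l+2)} = e} \<le> count_list es e"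
    and c4: "\<forall>r\<le>2*k. {p r, p (r+1)} \<in> E"
    using assms(4) unfolding even_connected_def by blast
  have dist: "p r \<noteq> p (r+1)" if "r \<le> 2*k" for r
  proof
    assume eq: "p r = p (r+1)"
    have "{p r, p (r+1)} \<in> E" using c4 that by blast
    then obtain x y where "x \<noteq> y" "{p r, p (r+1)} = {x,y}"
      using assms(1) unfolding simple_graph_def by blast
    then show False using eq by (metis doubleton_eq_iff)
  qed
  define f where "f l = {p (2*l+1), p (2*l+2)}" for l
  define M where "M = mset (map f [0..<k])"
  have sub: "M \<subseteq># mset es"
  proof (rule mset_subset_eqI)
    fix e
    show "count M e \<le> count (mset es) e"
    proof (cases "e \<in> set es")
      case True
      have "count M e = count_list (map f [0..<k]) e" by (simp only: M_def count_mset)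
      also have "\<dots> = card {l. l < k \<and> f l = e}" by (rule count_map_upt)
      finally show ?thesis using c3 True by (simp add: f_def count_mset)
    next
      case False
      then have "e \<notin> set_mset M" using c2 by (auto simp: M_def f_def)
      then show ?thesis by (simp add: not_in_iff)
    qed
  qed
  define R where "R = mset es - M"
  have esMR: "mset es = M + R" using sub by (simp add: R_def)
  define V where "V r = (Var (p r) :: ('v,'k) mpoly)" for r
  define N where "N = mset (map (\<lambda>r. {p (2*r), p (2*r+1)}) [0..<k+1]) + R"
  have prodM: "prod_mset (image_mset edge_mon M) = (\<Prod>l<k. V (2*l+1) * V (2*l+2))"
  proof -
    have "prod_mset (image_mset edge_mon M) = (\<Prod>l<k. (edge_mon (f l) :: ('v,'k) mpoly))"
      unfolding M_def by (rule pm_upt)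
    also have "\<dots> = (\<Prod>l<k. V (2*l+1) * V (2*l+2))"
    proof (rule prod.cong[OF refl])
      fix l assume "l \<in> {..<k}"
      then have "p (2*l+1) \<noteq> p (2*l+1+1)" by (intro dist) auto
      then show "edge_mon (f l) = V (2*l+1) * V (2*l+2)"
        by (simp add: f_def V_def edge_mon_pair)
    qed
    finally show ?thesis .
  qed
  have prodN1: "prod_mset (image_mset edge_mon (mset (map (\<lambda>r. {p (2*r), p (2*r+1)}) [0..<k+1])))
      = (\<Prod>r<k+1. V (2*r) * V (2*r+1))"
  proof -
    have "prod_mset (image_mset edge_mon (mset (map (\<lambda>r. {p (2*r), p (2*r+1)}) [0..<k+1])))
       = (\<Prod>r<k+1. (edge_mon {p (2*r), p (2*r+1)} :: ('v,'k) mpoly))"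
      by (rule pm_upt)
    also have "\<dots> = (\<Prod>r<k+1. V (2*r) * V (2*r+1))"
    proof (rule prod.cong[OF refl])
      fix r assume "r \<in> {..<k+1}"
      then have "p (2*r) \<noteq> p (2*r+1)" by (intro dist) auto
      then show "edge_mon {p (2*r), p (2*r+1)} = V (2*r) * V (2*r+1)"
        by (simp add: V_def edge_mon_pair)
    qed
    finally show ?thesis .
  qed
  have A: "(\<Prod>l<k. V (2*l+1) * V (2*l+2)) = (\<Prod>r<2*k. V (Suc r))"
    using prod_pairs[of "\<lambda>r. V (Suc r)" k] by (simp add: numeral_2_eq_2)
  have B: "(\<Prod>r<k+1. V (2*r) * V (2*r+1)) = V 0 * (\<Prod>r<2*k. V (Suc r)) * V (2*k+1)"
  proof -
    have "(\<Prod>r<k+1. V (2*r) * V (2*r+1)) = (\<Prod>r<2*(k+1). V r)" by (rule prod_pairs)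
    also have "\<dots> = V 0 * (\<Prod>r<2*k+1. V (Suc r))"
      by (simp add: prod.lessThan_Suc_shift del: prod.lessThan_Suc)
    also have "\<dots> = V 0 * (\<Prod>r<2*k. V (Suc r)) * V (2*k+1)" by (simp add: mult.assoc)
    finally show ?thesis .
  qed
  have eq: "Var u * Var v * prod_list (map edge_mon es) = (prod_mset (image_mset edge_mon N) :: ('v,'k) mpoly)"
  proof -
    have "prod_list (map edge_mon es) = (prod_mset (image_mset edge_mon (mset es)) :: ('v,'k) mpoly)"
      by (simp flip: prod_mset_prod_list)
    also have "\<dots> = prod_mset (image_mset edge_mon M) * prod_mset (image_mset edge_mon R)"
      by (simp add: esMR)
    finally have "Var u * Var v * prod_list (map edge_mon es)
       = (V 0 * (\<Prod>r<2*k. V (Suc r)) * V (2*k+1)) * prod_mset (image_mset edge_mon R)"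
      using prodM A p0 pk by (simp add: V_def algebra_simps)
    also have "\<dots> = prod_mset (image_mset edge_mon N)"
      unfolding N_def image_mset_union prod_mset.union prodN1 B ..
    finally show ?thesis .
  qed
  have sizeN: "size N = length es + 1"
  proof -
    have "size M = k" by (simp add: M_def)
    moreover have "size (mset es) = size M + size R" using esMR by simp
    ultimately show ?thesis by (simp add: N_def)
  qed
  have NE: "set_mset N \<subseteq> E"
  proof -
    have "set_mset R \<subseteq> set es" unfolding R_def using in_diffD by fastforce
    moreover have "\<forall>r<k+1. {p (2*r), p (2*r+1)} \<in> E" using c4 by auto
    ultimately show ?thesis using assms(3) by (auto simp: N_def)
  qed
  show ?thesis
    unfolding colon_ideal_def using mon_in_pow[OF NE, where 'k='k] eq sizeN
    by (simp add: mult.assoc)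
qed

end
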